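(* In the setting described in the context, let $\phi$ be an automorphism of the graph $\bar\Gamma$, let $\tau'=\phi(\tau)$ with root $r'=\phi(r)$, and let $wt'$ be the re-gauged weight function. Then: (1) There is at most one $*$-automorphism $\psi$ of $\mathscr A$ satisfying $\psi(wt(f))=wt'(\phi(f))$ for every oriented edge $f$; it is determined by the requirement $\psi(wt(f))=wt'(\phi(f))$ for the oriented edges $f$ not in $\tau$. (2) The elements $wt'(\phi(f))$, $f$ ranging over the oriented edges of $\bar\Gamma$, generate $\mathscr A$ as a $C^*$-algebra (so whether such a $\psi$ defines an automorphism only needs to be checked on the generators $wt(f)$). (3) $\psi$ is induced by a base change of $\pi_1(\bar\Gamma,r)$: there is a group automorphism $\beta$ of $\pi_1(\bar\Gamma,r)$ with $\beta([l^\tau(f)])=P([l^{\tau'}(\phi(f))])$ for every oriented edge $f$ not in $\tau$, and if $\psi$ as in (1) exists then $\psi(\rho(x))=\rho(\beta(x))$ for all $x\in\pi_1(\bar\Gamma,r)$.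
   Context: $\bar\Gamma$ is a finite connected graph (multiple edges and loops allowed); an oriented edge $f$ from $x$ to $y$ has reverse $\bar f$. An automorphism $\phi$ of $\bar\Gamma$ is a pair of bijections of the vertex set and of the edge set preserving incidence; it acts on oriented edges. $\tau$ is a spanning tree of $\bar\Gamma$ with root $r$. $\mathscr A$ is a unital $C^*$-algebra and $wt$ assigns to every oriented edge $f$ a unitary $wt(f)\in\mathscr A$ with $wt(\bar f)=wt(f)^*$, $wt(f)=1$ whenever the underlying edge lies in $\tau$, and such that $\mathscr A$ is generated as a $C^*$-algebra by all $wt(f)$. For a closed walk $\gamma$ at $r$ traversing $f_1,\dots,f_m$ in order put $\rho(\gamma)=wt(f_m)\cdots wt(f_1)$; this gives a group homomorphism $\rho:\pi_1(\bar\Gamma,r)\to U(\mathscr A)$. For a spanning tree $\sigma$ and vertices $x,y$ let $\sigma[x\to y]$ denote the unique non-backtracking path in $\sigma$ from $x$ to $y$. For an oriented edge $f$ from $x$ to $y$, $l^\tau(f)$ is the closed walk $\tau[r\to x]$, $f$, $\tau[y\to r]$ at $r$, and $l^{\tau'}(f)$ is the closed walk $\tau'[r'\to x]$, $f$, $\tau'[y\to r']$ at $r'$. $P:\pi_1(\bar\Gamma,r')\to\pi_1(\bar\Gamma,r)$ is the isomorphism $[\gamma]\mapsto[\tau[r\to r']\,\gamma\,\tau[r'\to r]]$. The re-gauged weight function for the pushed-forward spanning tree $\tau'$ is $wt'(f):=\rho(P([l^{\tau'}(f)]))$. *)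

theory Defs
  imports "HOL-Analysis.Analysis" "HOL-Algebra.Group"
begin

class cstar = real_normed_algebra_1 + banach +
  fixes cscale :: "complex \<Rightarrow> 'a \<Rightarrow> 'a"
    and cadj :: "'a \<Rightarrow> 'a"
  assumes cscale_of_real: "cscale (complex_of_real r) x = scaleR r x"
    and cscale_add_left: "cscale (a + b) x = cscale a x + cscale b x"
    and cscale_add_right: "cscale a (x + y) = cscale a x + cscale a y"
    and cscale_cscale: "cscale a (cscale b x) = cscale (a * b) x"
    and cscale_one: "cscale 1 x = x"
    and norm_cscale: "norm (cscale a x) = cmod a * norm x"
    and cscale_mult_left: "cscale a x * y = cscale a (x * y)"
    and cscale_mult_right: "x * cscale a y = cscale a (x * y)"
    and cadj_cadj: "cadj (cadj x) = x"
    and cadj_add: "cadj (x + y) = cadj x + cadj y"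
    and cadj_cscale: "cadj (cscale a x) = cscale (cnj a) (cadj x)"
    and cadj_mult: "cadj (x * y) = cadj y * cadj x"
    and cstar_identity: "norm (cadj x * x) = norm x ^ 2"

definition unitary :: "'a::cstar \<Rightarrow> bool" where
  "unitary u \<longleftrightarrow> cadj u * u = 1 \<and> u * cadj u = 1"

definition cstar_gen :: "'a::cstar set \<Rightarrow> 'a set" where
  "cstar_gen S = \<Inter>{B. S \<subseteq> B \<and> closed B \<and> 1 \<in> B
      \<and> (\<forall>x\<in>B. \<forall>y\<in>B. x + y \<in> B \<and> x * y \<in> B)
      \<and> (\<forall>c. \<forall>x\<in>B. cscale c x \<in> B) \<and> (\<forall>x\<in>B. cadj x \<in> B)}"

definition star_aut :: "('a::cstar \<Rightarrow> 'a) \<Rightarrow> bool" where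
  "star_aut \<psi> \<longleftrightarrow> bij \<psi> \<and> continuous_on UNIV \<psi>
     \<and> (\<forall>x y. \<psi> (x + y) = \<psi> x + \<psi> y)
     \<and> (\<forall>c x. \<psi> (cscale c x) = cscale c (\<psi> x))
     \<and> (\<forall>x y. \<psi> (x * y) = \<psi> x * \<psi> y)
     \<and> \<psi> 1 = 1
     \<and> (\<forall>x. \<psi> (cadj x) = cadj (\<psi> x))"

record ('v, 'o) graph =
  verts :: "'v set"
  oedges :: "'o set"
  rv :: "'o \<Rightarrow> 'o"
  org :: "'o \<Rightarrow> 'v"

definition tm :: "('v, 'o) graph \<Rightarrow> 'o \<Rightarrow> 'v" where
  "tm G f = org G (rv G f)"

fun walk :: "('v, 'o) graph \<Rightarrow> 'v \<Rightarrow> 'o list \<Rightarrow> 'v \<Rightarrow> bool" where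
  "walk G x [] y \<longleftrightarrow> x = y"
| "walk G x (f # ps) y \<longleftrightarrow> org G f = x \<and> walk G (tm G f) ps y"

definition reduced :: "('v, 'o) graph \<Rightarrow> 'o list \<Rightarrow> bool" where
  "reduced G ps \<longleftrightarrow> (\<forall>i. Suc i < length ps \<longrightarrow> ps ! Suc i \<noteq> rv G (ps ! i))"

definition finite_connected_graph :: "('v, 'o) graph \<Rightarrow> bool" where
  "finite_connected_graph G \<longleftrightarrow> finite (verts G) \<and> finite (oedges G) \<and> verts G \<noteq> {}
     \<and> (\<forall>f\<in>oedges G. rv G f \<in> oedges G \<and> rv G f \<noteq> f \<and> rv G (rv G f) = f
                       \<and> org G f \<in> verts G)
     \<and> (\<forall>x\<in>verts G. \<forall>y\<in>verts G. \<exists>ps. set ps \<subseteq> oedges G \<and> walk G x ps y)"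

definition spanning_tree :: "('v, 'o) graph \<Rightarrow> 'o set \<Rightarrow> bool" where
  "spanning_tree G T \<longleftrightarrow> T \<subseteq> oedges G \<and> (\<forall>f\<in>T. rv G f \<in> T)
     \<and> (\<forall>x\<in>verts G. \<forall>y\<in>verts G. \<exists>ps. set ps \<subseteq> T \<and> walk G x ps y)
     \<and> (\<forall>x ps. set ps \<subseteq> T \<and> walk G x ps x \<and> ps \<noteq> [] \<longrightarrow> \<not> reduced G ps)"

definition tpath :: "('v, 'o) graph \<Rightarrow> 'o set \<Rightarrow> 'v \<Rightarrow> 'v \<Rightarrow> 'o list" where
  "tpath G T x y = (THE ps. set ps \<subseteq> T \<and> walk G x ps y \<and> reduced G ps)"

definition lwalk :: "('v, 'o) graph \<Rightarrow> 'o set \<Rightarrow> 'v \<Rightarrow> 'o \<Rightarrow> 'o list" where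
  "lwalk G T r f = tpath G T r (org G f) @ [f] @ tpath G T (tm G f) r"

definition backtrack :: "('v, 'o) graph \<Rightarrow> ('o list \<times> 'o list) set" where
  "backtrack G = {(as @ [f, rv G f] @ bs, as @ bs) | as f bs. f \<in> oedges G}"

definition htp :: "('v, 'o) graph \<Rightarrow> ('o list \<times> 'o list) set" where
  "htp G = (backtrack G \<union> (backtrack G)\<inverse>)\<^sup>*"

definition hclass :: "('v, 'o) graph \<Rightarrow> 'o list \<Rightarrow> 'o list set" where
  "hclass G ps = htp G `` {ps}"

definition closed_walks :: "('v, 'o) graph \<Rightarrow> 'v \<Rightarrow> 'o list set" where
  "closed_walks G r = {ps. set ps \<subseteq> oedges G \<and> walk G r ps r}"

definition pi1 :: "('v, 'o) graph \<Rightarrow> 'v \<Rightarrow> 'o list set monoid" where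
  "pi1 G r = \<lparr> carrier = hclass G ` closed_walks G r,
               mult = (\<lambda>A B. htp G `` {a @ b | a b. a \<in> A \<and> b \<in> B}),
               one = hclass G [] \<rparr>"

definition basechange :: "('v, 'o) graph \<Rightarrow> 'o set \<Rightarrow> 'v \<Rightarrow> 'v \<Rightarrow> 'o list set \<Rightarrow> 'o list set" where
  "basechange G T r r' A = htp G `` {tpath G T r r' @ a @ tpath G T r' r | a. a \<in> A}"

definition rho_walk :: "('o \<Rightarrow> 'a::cstar) \<Rightarrow> 'o list \<Rightarrow> 'a" where
  "rho_walk wt ps = foldl (\<lambda>acc f. wt f * acc) 1 ps"

definition rho :: "('o \<Rightarrow> 'a::cstar) \<Rightarrow> 'o list set \<Rightarrow> 'a" where
  "rho wt A = rho_walk wt (SOME ps. ps \<in> A)"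

definition weight_function :: "('v, 'o) graph \<Rightarrow> 'o set \<Rightarrow> ('o \<Rightarrow> 'a::cstar) \<Rightarrow> bool" where
  "weight_function G T wt \<longleftrightarrow> (\<forall>f\<in>oedges G. unitary (wt f) \<and> wt (rv G f) = cadj (wt f))
     \<and> (\<forall>f\<in>T. wt f = 1) \<and> cstar_gen (wt ` oedges G) = UNIV"

definition regauge :: "('v, 'o) graph \<Rightarrow> 'o set \<Rightarrow> 'v \<Rightarrow> 'o set \<Rightarrow> 'v
    \<Rightarrow> ('o \<Rightarrow> 'a::cstar) \<Rightarrow> 'o \<Rightarrow> 'a" where
  "regauge G T r T' r' wt f = rho wt (basechange G T r r' (hclass G (lwalk G T' r' f)))"

definition graph_aut :: "('v, 'o) graph \<Rightarrow> ('v \<Rightarrow> 'v) \<Rightarrow> ('o \<Rightarrow> 'o) \<Rightarrow> bool" where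
  "graph_aut G \<phi>V \<phi>O \<longleftrightarrow> bij_betw \<phi>V (verts G) (verts G) \<and> bij_betw \<phi>O (oedges G) (oedges G)
     \<and> (\<forall>f\<in>oedges G. \<phi>O (rv G f) = rv G (\<phi>O f) \<and> org G (\<phi>O f) = \<phi>V (org G f))"

end

theory Submission
  imports Defs
begin


section \<open>Reducedness\<close>

fun red :: "('v,'o) graph \<Rightarrow> 'o list \<Rightarrow> bool" where
  "red G (a # b # xs) = (b \<noteq> rv G a \<and> red G (b # xs))"
| "red G _ = True"

lemma reduced_red: "reduced G ps = red G ps"
proof (induction G ps rule: red.induct)
  case (1 G a b xs)
  have "reduced G (a # b # xs) = (b \<noteq> rv G a \<and> reduced G (b # xs))"
    unfolding reduced_def
  proof (intro iffI conjI allI impI)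
    assume H: "\<forall>i. Suc i < length (a # b # xs) \<longrightarrow> (a # b # xs) ! Suc i \<noteq> rv G ((a # b # xs) ! i)"
    show "b \<noteq> rv G a" using H[rule_format, of 0] by simp
    fix i assume "Suc i < length (b # xs)"
    then show "(b # xs) ! Suc i \<noteq> rv G ((b # xs) ! i)" using H[rule_format, of "Suc i"] by simp
  next
    fix i assume H: "b \<noteq> rv G a \<and> (\<forall>i. Suc i < length (b # xs) \<longrightarrow> (b # xs) ! Suc i \<noteq> rv G ((b # xs) ! i))"
      and i: "Suc i < length (a # b # xs)"
    show "(a # b # xs) ! Suc i \<noteq> rv G ((a # b # xs) ! i)"
    proof (cases i)
      case 0 then show ?thesis using H by simp
    next
      case (Suc j) then show ?thesis using H i by simp
    qed
  qed
  then show ?case using 1 by simp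
next
  case ("2_1" G) then show ?case by (simp add: reduced_def)
next
  case ("2_2" G v) then show ?case by (simp add: reduced_def)
qed

lemma red_Cons: "red G (f # p) \<longleftrightarrow> red G p \<and> (p \<noteq> [] \<longrightarrow> hd p \<noteq> rv G f)"
  by (cases p) auto

lemma red_append: "red G (xs @ ys) \<longleftrightarrow> red G xs \<and> red G ys \<and> (xs \<noteq> [] \<longrightarrow> ys \<noteq> [] \<longrightarrow> hd ys \<noteq> rv G (last xs))"
proof (induction xs)
  case Nil then show ?case by simp
next
  case (Cons a xs)
  show ?case
  proof (cases xs)
    case Nil then show ?thesis by (simp add: red_Cons)
  next
    case (Cons b ys') then show ?thesis using Cons.IH by (auto simp: red_Cons)
  qed
qed

lemma not_red_split: "\<not> red G p \<Longrightarrow> \<exists>as f bs. p = as @ [f, rv G f] @ bs"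
proof (induction G p rule: red.induct)
  case (1 G a b xs)
  show ?case
  proof (cases "b = rv G a")
    case True then show ?thesis by (rule_tac x="[]" in exI) auto
  next
    case False
    then have "\<not> red G (b # xs)" using 1(2) by simp
    then obtain as f bs where "b # xs = as @ [f, rv G f] @ bs" using 1(1) False by blast
    then show ?thesis by (rule_tac x="a # as" in exI) auto
  qed
qed auto

section \<open>Walks\<close>

lemma walk_append: "walk G x (p @ q) z \<longleftrightarrow> (\<exists>y. walk G x p y \<and> walk G y q z)"
  by (induction p arbitrary: x) auto

lemma walk_Cons_end: "walk G x (p @ [f]) z \<longleftrightarrow> walk G x p (org G f) \<and> z = tm G f"
  by (auto simp: walk_append)

definition inv_w :: "('v,'o) graph \<Rightarrow> 'o list \<Rightarrow> 'o list" where
  "inv_w G p = rev (map (rv G) p)"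

lemma inv_w_simps[simp]: "inv_w G [] = []" "inv_w G (f # p) = inv_w G p @ [rv G f]"
  "inv_w G (p @ q) = inv_w G q @ inv_w G p"
  by (auto simp: inv_w_def)

context
  fixes G :: "('v,'o) graph"
  assumes G: "finite_connected_graph G"
begin

lemma rv_in: "f \<in> oedges G \<Longrightarrow> rv G f \<in> oedges G"
  using G by (auto simp: finite_connected_graph_def)
lemma rv_rv[simp]: "f \<in> oedges G \<Longrightarrow> rv G (rv G f) = f"
  using G by (auto simp: finite_connected_graph_def)
lemma rv_neq: "f \<in> oedges G \<Longrightarrow> rv G f \<noteq> f"
  using G by (auto simp: finite_connected_graph_def)
lemma org_in: "f \<in> oedges G \<Longrightarrow> org G f \<in> verts G"
  using G by (auto simp: finite_connected_graph_def)
lemma tm_in: "f \<in> oedges G \<Longrightarrow> tm G f \<in> verts G"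
  using G by (auto simp: finite_connected_graph_def tm_def)
lemma tm_rv: "f \<in> oedges G \<Longrightarrow> tm G (rv G f) = org G f"
  by (simp add: tm_def)
lemma org_rv: "org G (rv G f) = tm G f"
  by (simp add: tm_def)

lemma walk_inv: "set p \<subseteq> oedges G \<Longrightarrow> walk G x p y \<Longrightarrow> walk G y (inv_w G p) x"
  by (induction p arbitrary: x) (auto simp: walk_append org_rv tm_rv)

lemma set_inv_w: "set (inv_w G p) = rv G ` set p"
  by (auto simp: inv_w_def)

lemma red_inv: "set p \<subseteq> oedges G \<Longrightarrow> red G p \<Longrightarrow> red G (inv_w G p)"
proof (induction p)
  case Nil then show ?case by simp
next
  case (Cons f p)
  have "red G (inv_w G p)" using Cons by (auto simp: red_Cons)
  moreover have "p \<noteq> [] \<Longrightarrow> last (inv_w G p) = rv G (hd p)"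
    by (cases p) (auto simp: inv_w_def)
  moreover have "p \<noteq> [] \<Longrightarrow> hd p \<noteq> rv G f" using Cons.prems by (auto simp: red_Cons)
  moreover have "p \<noteq> [] \<Longrightarrow> hd p \<in> oedges G" using Cons.prems(1) by (cases p) auto
  ultimately show ?case using Cons.prems(1)
    by (auto simp: red_append inv_w_def)
qed

lemma walk_remove: "f \<in> oedges G \<Longrightarrow> walk G x (as @ [f, rv G f] @ bs) y \<Longrightarrow> walk G x (as @ bs) y"
  by (auto simp: walk_append tm_rv org_rv)

lemma in_htp_backtrack: "f \<in> oedges G \<Longrightarrow> (as @ [f, rv G f] @ bs, as @ bs) \<in> htp G"
  unfolding htp_def backtrack_def by blast

lemma reduce_walk:
  assumes "set p \<subseteq> S" "S \<subseteq> oedges G" "walk G x p y"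
  shows "\<exists>q. set q \<subseteq> S \<and> walk G x q y \<and> red G q \<and> (p, q) \<in> htp G"
  using assms
proof (induction "length p" arbitrary: p rule: less_induct)
  case less
  show ?case
  proof (cases "red G p")
    case True then show ?thesis using less.prems by (auto simp: htp_def)
  next
    case False
    then obtain as f bs where p: "p = as @ [f, rv G f] @ bs" by (blast dest: not_red_split)
    have f: "f \<in> oedges G" using less.prems p by auto
    have "walk G x (as @ bs) y" using walk_remove[OF f] less.prems p by simp
    moreover have "set (as @ bs) \<subseteq> S" using less.prems p by auto
    ultimately obtain q where q: "set q \<subseteq> S \<and> walk G x q y \<and> red G q \<and> (as @ bs, q) \<in> htp G"
      using less.hyps[of "as @ bs"] p less.prems by auto
    have "(p, as @ bs) \<in> htp G" using p in_htp_backtrack[OF f] by simp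
    then have "(p, q) \<in> htp G" using q unfolding htp_def by (meson rtrancl_trans)
    then show ?thesis using q by blast
  qed
qed

end


context
  fixes G :: "('v,'o) graph" and Tr :: "'o set"
  assumes G: "finite_connected_graph G" and Tr: "spanning_tree G Tr"
begin

lemma tr_sub: "Tr \<subseteq> oedges G" using Tr by (simp add: spanning_tree_def)
lemma tr_rv: "f \<in> Tr \<Longrightarrow> rv G f \<in> Tr" using Tr by (simp add: spanning_tree_def)
lemma tr_conn: "x \<in> verts G \<Longrightarrow> y \<in> verts G \<Longrightarrow> \<exists>ps. set ps \<subseteq> Tr \<and> walk G x ps y"
  using Tr by (simp add: spanning_tree_def)
lemma tr_acyc: "set p \<subseteq> Tr \<Longrightarrow> walk G x p x \<Longrightarrow> p \<noteq> [] \<Longrightarrow> \<not> red G p"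
  using Tr by (auto simp: spanning_tree_def reduced_red)

lemma tr_null: "set p \<subseteq> Tr \<Longrightarrow> walk G x p x \<Longrightarrow> (p, []) \<in> htp G"
proof -
  assume a: "set p \<subseteq> Tr" "walk G x p x"
  obtain q where q: "set q \<subseteq> Tr" "walk G x q x" "red G q" "(p, q) \<in> htp G"
    using reduce_walk[OF G a(1) tr_sub a(2)] by blast
  then have "q = []" using tr_acyc by blast
  then show ?thesis using q by simp
qed

lemma tr_unique: "set p \<subseteq> Tr \<Longrightarrow> set q \<subseteq> Tr \<Longrightarrow> walk G x p y \<Longrightarrow> walk G x q y
   \<Longrightarrow> red G p \<Longrightarrow> red G q \<Longrightarrow> p = q"
proof (induction p arbitrary: x q)
  case Nil
  then show ?case using tr_acyc[of q x] by auto
next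
  case (Cons f p')
  show ?case
  proof (cases q)
    case Nil
    then show ?thesis using Cons.prems tr_acyc[of "f # p'" x] by auto
  next
    case (Cons g q')
    show ?thesis
    proof (cases "f = g")
      case True
      then show ?thesis using Cons.IH[where x="tm G f" and q=q'] Cons.prems \<open>q = g # q'\<close>
        by (auto simp: red_Cons)
    next
      case False
      let ?L = "inv_w G (g # q') @ (f # p')"
      have sq: "set (g # q') \<subseteq> oedges G" using Cons.prems \<open>q = g # q'\<close> tr_sub by auto
      have w: "walk G y ?L y"
        using walk_inv[OF G sq] Cons.prems \<open>q = g # q'\<close> by (auto simp: walk_append)
      have r: "red G ?L"
        using red_inv[OF G sq] Cons.prems \<open>q = g # q'\<close> False rv_rv[OF G] sq
        by (subst red_append) auto
      have s: "set ?L \<subseteq> Tr" using Cons.prems \<open>q = g # q'\<close> tr_rv by (auto simp: set_inv_w[OF G])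
      show ?thesis using tr_acyc[OF s w] r by simp
    qed
  qed
qed

lemma tpath_ex: "x \<in> verts G \<Longrightarrow> y \<in> verts G \<Longrightarrow> \<exists>q. set q \<subseteq> Tr \<and> walk G x q y \<and> red G q"
proof -
  assume "x \<in> verts G" "y \<in> verts G"
  then obtain p where "set p \<subseteq> Tr" "walk G x p y" using tr_conn by blast
  then show ?thesis using reduce_walk[OF G _ tr_sub] by blast
qed

lemma tpath_eq: "x \<in> verts G \<Longrightarrow> y \<in> verts G \<Longrightarrow> set q \<subseteq> Tr \<Longrightarrow> walk G x q y \<Longrightarrow> red G q
  \<Longrightarrow> tpath G Tr x y = q"
  unfolding tpath_def reduced_red
  by (rule the_equality) (auto intro: tr_unique)

lemma tpath_props: "x \<in> verts G \<Longrightarrow> y \<in> verts G \<Longrightarrow>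
   set (tpath G Tr x y) \<subseteq> Tr \<and> walk G x (tpath G Tr x y) y \<and> red G (tpath G Tr x y)"
proof -
  assume a: "x \<in> verts G" "y \<in> verts G"
  then obtain q where "set q \<subseteq> Tr \<and> walk G x q y \<and> red G q" using tpath_ex by blast
  then show ?thesis using tpath_eq[OF a, of q] by simp
qed

lemma tpath_same: "x \<in> verts G \<Longrightarrow> tpath G Tr x x = []"
  by (rule tpath_eq) auto

end


lemma htp_refl: "(a, a) \<in> htp G" by (simp add: htp_def)
lemma htp_sym: "(a, b) \<in> htp G \<Longrightarrow> (b, a) \<in> htp G"
proof -
  have "sym (htp G)" unfolding htp_def by (rule sym_rtrancl) (simp add: sym_Un_converse)
  then show "(a, b) \<in> htp G \<Longrightarrow> (b, a) \<in> htp G" by (meson symD)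
qed
lemma htp_trans: "(a, b) \<in> htp G \<Longrightarrow> (b, c) \<in> htp G \<Longrightarrow> (a, c) \<in> htp G"
  unfolding htp_def by (rule rtrancl_trans)

lemma backtrack_cong: "(y, z) \<in> backtrack G \<Longrightarrow> (c @ y @ d, c @ z @ d) \<in> backtrack G"
  unfolding backtrack_def
  by clarsimp (metis append.assoc append_Cons)

lemma htp_cong: "(a, b) \<in> htp G \<Longrightarrow> (c @ a @ d, c @ b @ d) \<in> htp G"
  unfolding htp_def
proof (induction rule: rtrancl_induct)
  case base then show ?case by simp
next
  case (step y z)
  then have "(c @ y @ d, c @ z @ d) \<in> backtrack G \<union> (backtrack G)\<inverse>"
    using backtrack_cong by blast
  then show ?case using step by (meson rtrancl.rtrancl_into_rtrancl)
qed

lemma htp_cong2: "(a, b) \<in> htp G \<Longrightarrow> (a', b') \<in> htp G \<Longrightarrow> (a @ a', b @ b') \<in> htp G"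
  using htp_cong[of a b G "[]" a'] htp_cong[of a' b' G b "[]"] htp_trans by fastforce

lemma mem_hclass: "b \<in> hclass G a \<longleftrightarrow> (a, b) \<in> htp G"
  by (simp add: hclass_def)

lemma hclass_eq: "hclass G a = hclass G b \<longleftrightarrow> (a, b) \<in> htp G"
  unfolding hclass_def
  by (auto intro: htp_refl htp_trans htp_sym)

lemma bc_class: "htp G `` {c @ x @ d | x. x \<in> hclass G a} = hclass G (c @ a @ d)"
  unfolding hclass_def
  by (auto intro: htp_refl htp_trans htp_sym htp_cong)

lemma mult_class: "htp G `` {x @ y | x y. x \<in> hclass G a \<and> y \<in> hclass G b} = hclass G (a @ b)"
  unfolding hclass_def
  by (auto intro: htp_refl htp_trans htp_sym htp_cong2)

lemma htp_map:
  assumes "\<forall>f\<in>oedges G. \<phi> f \<in> oedges G \<and> \<phi> (rv G f) = rv G (\<phi> f)"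
  shows "(a, b) \<in> htp G \<Longrightarrow> (map \<phi> a, map \<phi> b) \<in> htp G"
  unfolding htp_def
proof (induction rule: rtrancl_induct)
  case base then show ?case by simp
next
  case (step y z)
  have "(y, z) \<in> backtrack G \<Longrightarrow> (map \<phi> y, map \<phi> z) \<in> backtrack G"
       "(z, y) \<in> backtrack G \<Longrightarrow> (map \<phi> z, map \<phi> y) \<in> backtrack G"
    using assms unfolding backtrack_def by force+
  then have "(map \<phi> y, map \<phi> z) \<in> backtrack G \<union> (backtrack G)\<inverse>"
    using step(2) by blast
  then show ?case using step by (meson rtrancl.rtrancl_into_rtrancl)
qed

section \<open>rho\<close>

lemma foldl_rho: "foldl (\<lambda>acc f. w f * acc) a p = rho_walk w p * a"
  unfolding rho_walk_def
proof (induction p arbitrary: a)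
  case Nil then show ?case by simp
next
  case (Cons f p)
  show ?case using Cons[of "w f * a"] Cons[of "w f"] by (simp add: mult.assoc)
qed

lemma rho_walk_Nil[simp]: "rho_walk w [] = 1" by (simp add: rho_walk_def)
lemma rho_walk_Cons[simp]: "rho_walk w (f # p) = rho_walk w p * w f"
  using foldl_rho[of w "w f * 1" p] by (simp add: rho_walk_def)
lemma rho_walk_append[simp]: "rho_walk w (p @ q) = rho_walk w q * rho_walk w p"
  by (induction p) (auto simp: mult.assoc)
lemma rho_walk_map: "rho_walk w (map \<phi> p) = rho_walk (w \<circ> \<phi>) p"
  by (induction p) auto
lemma rho_walk_one: "\<forall>f\<in>set p. w f = 1 \<Longrightarrow> rho_walk w p = 1"
  by (induction p) auto
lemma rho_walk_cong: "\<forall>f\<in>set p. w f = w' f \<Longrightarrow> rho_walk w p = rho_walk w' p"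
  by (induction p) auto

lemma rho_htp:
  assumes "\<forall>f\<in>oedges G. w (rv G f) * w f = 1"
  shows "(a, b) \<in> htp G \<Longrightarrow> rho_walk w a = rho_walk w b"
  unfolding htp_def
proof (induction rule: rtrancl_induct)
  case base then show ?case by simp
next
  case (step y z)
  have "(y, z) \<in> backtrack G \<or> (z, y) \<in> backtrack G" using step(2) by blast
  then have "rho_walk w y = rho_walk w z"
    using assms unfolding backtrack_def by (auto simp: mult.assoc)
  then show ?case using step by simp
qed

lemma rho_class:
  assumes "\<forall>f\<in>oedges G. w (rv G f) * w f = 1"
  shows "rho w (hclass G a) = rho_walk w a"
proof -
  have "a \<in> hclass G a" by (simp add: mem_hclass htp_refl)
  then have "(SOME p. p \<in> hclass G a) \<in> hclass G a" by (rule someI)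
  then show ?thesis unfolding rho_def using rho_htp[OF assms] by (metis mem_hclass htp_sym)
qed

lemma unitary_mult: "unitary u \<Longrightarrow> unitary v \<Longrightarrow> unitary (u * v)"
  unfolding unitary_def by (simp add: cadj_mult mult.assoc) (metis mult.assoc mult_1_left)

lemma cadj_one: "cadj (1::'a::cstar) = 1"
proof -
  have "cadj (cadj 1 * (1::'a)) = cadj 1 * cadj (cadj 1)" by (rule cadj_mult)
  then show ?thesis by (simp add: cadj_cadj)
qed

lemma unitary_one: "unitary (1::'a::cstar)"
  unfolding unitary_def by (simp add: cadj_one)

lemma unitary_rho_walk: "\<forall>f\<in>set p. unitary (w f) \<Longrightarrow> unitary (rho_walk w p)"
  by (induction p) (auto intro: unitary_mult unitary_one)

lemma hom_rho_walk: "\<psi> 1 = 1 \<Longrightarrow> (\<forall>x y. \<psi> (x * y) = \<psi> x * \<psi> y) \<Longrightarrow>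
   \<psi> (rho_walk w p) = rho_walk (\<psi> \<circ> w) p"
  by (induction p) auto



context
  fixes G :: "('v,'o) graph" and \<phi>V \<phi>O
  assumes G: "finite_connected_graph G" and aut: "graph_aut G \<phi>V \<phi>O"
begin

lemma aut_O: "f \<in> oedges G \<Longrightarrow> \<phi>O f \<in> oedges G"
  using aut by (auto simp: graph_aut_def bij_betw_def)
lemma aut_V: "x \<in> verts G \<Longrightarrow> \<phi>V x \<in> verts G"
  using aut by (auto simp: graph_aut_def bij_betw_def)
lemma aut_rv: "f \<in> oedges G \<Longrightarrow> \<phi>O (rv G f) = rv G (\<phi>O f)"
  using aut by (auto simp: graph_aut_def)
lemma aut_org: "f \<in> oedges G \<Longrightarrow> org G (\<phi>O f) = \<phi>V (org G f)"
  using aut by (auto simp: graph_aut_def)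
lemma aut_tm: "f \<in> oedges G \<Longrightarrow> tm G (\<phi>O f) = \<phi>V (tm G f)"
  by (simp add: tm_def aut_rv[symmetric] aut_org rv_in[OF G])
lemma aut_injO: "inj_on \<phi>O (oedges G)"
  using aut by (auto simp: graph_aut_def bij_betw_def)

lemma walk_map: "set p \<subseteq> oedges G \<Longrightarrow> walk G x p y \<Longrightarrow> walk G (\<phi>V x) (map \<phi>O p) (\<phi>V y)"
  by (induction p arbitrary: x) (auto simp: aut_org aut_tm)

lemma red_map: "set p \<subseteq> oedges G \<Longrightarrow> red G p \<Longrightarrow> red G (map \<phi>O p)"
proof (induction p)
  case Nil then show ?case by simp
next
  case (Cons f p)
  have "p \<noteq> [] \<Longrightarrow> \<phi>O (hd p) \<noteq> rv G (\<phi>O f)"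
  proof
    assume p: "p \<noteq> []" and e: "\<phi>O (hd p) = rv G (\<phi>O f)"
    have h: "hd p \<in> oedges G" using Cons.prems p by (cases p) auto
    have f: "f \<in> oedges G" using Cons.prems by auto
    have "\<phi>O (hd p) = \<phi>O (rv G f)" using e aut_rv[OF f] by simp
    then have "hd p = rv G f" using inj_onD[OF aut_injO] h rv_in[OF G f] by blast
    then show False using Cons.prems p by (simp add: red_Cons)
  qed
  then show ?case using Cons by (auto simp: red_Cons hd_map)
qed

lemma aut_inv: "graph_aut G (inv_into (verts G) \<phi>V) (inv_into (oedges G) \<phi>O)"
proof -
  have bV: "bij_betw \<phi>V (verts G) (verts G)" and bO: "bij_betw \<phi>O (oedges G) (oedges G)"
    using aut by (auto simp: graph_aut_def)
  have "bij_betw (inv_into (verts G) \<phi>V) (verts G) (verts G)" using bV by (rule bij_betw_inv_into)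
  moreover have "bij_betw (inv_into (oedges G) \<phi>O) (oedges G) (oedges G)" using bO by (rule bij_betw_inv_into)
  moreover have "\<forall>f\<in>oedges G. inv_into (oedges G) \<phi>O (rv G f) = rv G (inv_into (oedges G) \<phi>O f)
       \<and> org G (inv_into (oedges G) \<phi>O f) = inv_into (verts G) \<phi>V (org G f)"
  proof
    fix f assume f: "f \<in> oedges G"
    define g where "g = inv_into (oedges G) \<phi>O f"
    have g: "g \<in> oedges G" "\<phi>O g = f" unfolding g_def using bO f
      by (auto simp: bij_betw_def inv_into_into f_inv_into_f)
    have "inv_into (oedges G) \<phi>O (rv G f) = rv G g"
      by (rule inv_into_f_eq[OF aut_injO rv_in[OF G g(1)]]) (simp add: aut_rv[OF g(1)] g(2))
    moreover have "inv_into (verts G) \<phi>V (org G f) = org G g"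
      by (rule inv_into_f_eq[OF bij_betw_imp_inj_on[OF bV] org_in[OF G g(1)]]) (simp add: aut_org[OF g(1)] g(2)[symmetric])
    ultimately show "inv_into (oedges G) \<phi>O (rv G f) = rv G (inv_into (oedges G) \<phi>O f)
       \<and> org G (inv_into (oedges G) \<phi>O f) = inv_into (verts G) \<phi>V (org G f)"
      unfolding g_def by simp
  qed
  ultimately show ?thesis by (simp add: graph_aut_def)
qed

end

lemma tree_image:
  assumes G: "finite_connected_graph G" and aut: "graph_aut G \<phi>V \<phi>O" and Tr: "spanning_tree G Tr"
  shows "spanning_tree G (\<phi>O ` Tr)"
proof -
  have sub: "Tr \<subseteq> oedges G" by (rule tr_sub[OF G Tr])
  have bV: "bij_betw \<phi>V (verts G) (verts G)" and bO: "bij_betw \<phi>O (oedges G) (oedges G)"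
    using aut by (auto simp: graph_aut_def)
  let ?iV = "inv_into (verts G) \<phi>V" and ?iO = "inv_into (oedges G) \<phi>O"
  have ia: "graph_aut G ?iV ?iO" by (rule aut_inv[OF G aut])
  have c1: "\<phi>O ` Tr \<subseteq> oedges G" using sub aut_O[OF G aut] by auto
  have c2: "\<forall>f\<in>\<phi>O ` Tr. rv G f \<in> \<phi>O ` Tr"
  proof
    fix f assume "f \<in> \<phi>O ` Tr"
    then obtain t where t: "t \<in> Tr" "f = \<phi>O t" by blast
    have "rv G f = \<phi>O (rv G t)" using t aut_rv[OF G aut, of t] sub by auto
    then show "rv G f \<in> \<phi>O ` Tr" using tr_rv[OF G Tr t(1)] by blast
  qed
  have c3: "\<forall>x\<in>verts G. \<forall>y\<in>verts G. \<exists>ps. set ps \<subseteq> \<phi>O ` Tr \<and> walk G x ps y"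
  proof (intro ballI)
    fix x y assume xy: "x \<in> verts G" "y \<in> verts G"
    have x': "?iV x \<in> verts G" "\<phi>V (?iV x) = x"
      using bij_betw_inv_into_right[OF bV xy(1)] bij_betwE[OF bij_betw_inv_into[OF bV]] xy(1) by auto
    have y': "?iV y \<in> verts G" "\<phi>V (?iV y) = y"
      using bij_betw_inv_into_right[OF bV xy(2)] bij_betwE[OF bij_betw_inv_into[OF bV]] xy(2) by auto
    obtain ps where ps: "set ps \<subseteq> Tr" "walk G (?iV x) ps (?iV y)" using tr_conn[OF G Tr x'(1) y'(1)] by blast
    have "walk G x (map \<phi>O ps) y" using walk_map[OF G aut _ ps(2)] ps(1) sub x' y' by auto
    then show "\<exists>ps. set ps \<subseteq> \<phi>O ` Tr \<and> walk G x ps y" using ps(1) by (rule_tac x="map \<phi>O ps" in exI) auto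
  qed
  have c4: "\<forall>x ps. set ps \<subseteq> \<phi>O ` Tr \<and> walk G x ps x \<and> ps \<noteq> [] \<longrightarrow> \<not> red G ps"
  proof (intro allI impI notI)
    fix x ps assume H: "set ps \<subseteq> \<phi>O ` Tr \<and> walk G x ps x \<and> ps \<noteq> []" and r: "red G ps"
    have s: "set ps \<subseteq> oedges G" using H c1 by auto
    have "set (map ?iO ps) \<subseteq> Tr"
    proof
      fix g assume "g \<in> set (map ?iO ps)"
      then obtain f where f: "f \<in> set ps" "g = ?iO f" by auto
      then obtain t where t: "t \<in> Tr" "f = \<phi>O t" using H by blast
      have "?iO (\<phi>O t) = t" using inv_into_f_f[OF aut_injO[OF G aut]] t(1) sub by blast
      then show "g \<in> Tr" using f t by simp
    qed
    moreover have "walk G (?iV x) (map ?iO ps) (?iV x)" using walk_map[OF G ia s] H by simp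
    moreover have "red G (map ?iO ps)" using red_map[OF G ia s r] .
    ultimately show False using tr_acyc[OF G Tr] H by auto
  qed
  show ?thesis using c1 c2 c3 c4 by (simp add: spanning_tree_def reduced_red)
qed

lemma tpath_map:
  assumes G: "finite_connected_graph G" and aut: "graph_aut G \<phi>V \<phi>O" and Tr: "spanning_tree G Tr"
    and xy: "x \<in> verts G" "y \<in> verts G"
  shows "tpath G (\<phi>O ` Tr) (\<phi>V x) (\<phi>V y) = map \<phi>O (tpath G Tr x y)"
proof -
  have T': "spanning_tree G (\<phi>O ` Tr)" by (rule tree_image[OF G aut Tr])
  have p: "set (tpath G Tr x y) \<subseteq> Tr \<and> walk G x (tpath G Tr x y) y \<and> red G (tpath G Tr x y)"
    by (rule tpath_props[OF G Tr xy])
  have s: "set (tpath G Tr x y) \<subseteq> oedges G" using p tr_sub[OF G Tr] by auto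
  show ?thesis
    apply (rule tpath_eq[OF G T' aut_V[OF G aut xy(1)] aut_V[OF G aut xy(2)]])
    subgoal using p by auto
    subgoal by (rule walk_map[OF G aut s]) (use p in blast)
    subgoal by (rule red_map[OF G aut s]) (use p in blast)
    done
qed

lemma lwalk_map:
  assumes G: "finite_connected_graph G" and aut: "graph_aut G \<phi>V \<phi>O" and Tr: "spanning_tree G Tr"
    and r: "r \<in> verts G" and f: "f \<in> oedges G"
  shows "lwalk G (\<phi>O ` Tr) (\<phi>V r) (\<phi>O f) = map \<phi>O (lwalk G Tr r f)"
  unfolding lwalk_def
  using tpath_map[OF G aut Tr r org_in[OF G f]] tpath_map[OF G aut Tr tm_in[OF G f] r]
    aut_org[OF G aut f] aut_tm[OF G aut f] by simp



definition cstar_closed :: "'a::cstar set \<Rightarrow> bool" where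
  "cstar_closed B \<longleftrightarrow> closed B \<and> 1 \<in> B
      \<and> (\<forall>x\<in>B. \<forall>y\<in>B. x + y \<in> B \<and> x * y \<in> B)
      \<and> (\<forall>c. \<forall>x\<in>B. cscale c x \<in> B) \<and> (\<forall>x\<in>B. cadj x \<in> B)"

lemma cstar_gen_alt: "cstar_gen S = \<Inter>{B. S \<subseteq> B \<and> cstar_closed B}"
  unfolding cstar_gen_def cstar_closed_def by meson

lemma cstar_gen_sub: "S \<subseteq> cstar_gen S"
  unfolding cstar_gen_alt by blast

lemma cstar_gen_min: "S \<subseteq> B \<Longrightarrow> cstar_closed B \<Longrightarrow> cstar_gen S \<subseteq> B"
  unfolding cstar_gen_alt by blast

lemma cstar_gen_closed: "cstar_closed (cstar_gen S)"
  unfolding cstar_gen_alt cstar_closed_def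
  by (auto intro!: closed_Inter)

lemma cstar_closed_rho: "cstar_closed B \<Longrightarrow> \<forall>f\<in>set p. w f \<in> B \<Longrightarrow> rho_walk w p \<in> B"
  by (induction p) (auto simp: cstar_closed_def)

lemma aut_unique:
  assumes "star_aut \<psi>1" "star_aut \<psi>2" "cstar_gen W = UNIV" "\<forall>w\<in>W. \<psi>1 w = \<psi>2 w"
  shows "\<psi>1 = \<psi>2"
proof -
  let ?D = "{x. \<psi>1 x = \<psi>2 x}"
  have c: "continuous_on UNIV \<psi>1" "continuous_on UNIV \<psi>2" using assms(1,2) by (auto simp: star_aut_def)
  have "cstar_closed ?D"
    unfolding cstar_closed_def using assms(1,2) closed_Collect_eq[OF c]
    by (auto simp: star_aut_def)
  then have "cstar_gen W \<subseteq> ?D" using assms(4) by (intro cstar_gen_min) auto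
  then show ?thesis using assms(3) by auto
qed

lemma conj_gen:
  fixes u :: "'a::cstar"
  assumes u: "unitary u" and B: "cstar_closed B" and W: "cstar_gen W = UNIV"
    and h: "\<forall>w\<in>W. cadj u * w * u \<in> B"
  shows "B = UNIV"
proof -
  let ?D = "(\<lambda>y. cadj u * y * u) -` B"
  have uu: "cadj u * u = 1" "u * cadj u = 1" using u by (auto simp: unitary_def)
  have "closed ?D" using B by (intro closed_vimage) (auto simp: cstar_closed_def intro!: continuous_intros)
  moreover have "1 \<in> ?D" using B uu by (simp add: cstar_closed_def)
  moreover have "\<forall>x\<in>?D. \<forall>y\<in>?D. x + y \<in> ?D \<and> x * y \<in> ?D"
  proof (intro ballI conjI)
    fix x y assume xy: "x \<in> ?D" "y \<in> ?D"
    have "cadj u * (x + y) * u = cadj u * x * u + cadj u * y * u" by (simp add: algebra_simps)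
    then show "x + y \<in> ?D" using xy B by (simp add: cstar_closed_def)
    have "cadj u * (x * y) * u = (cadj u * x * u) * (cadj u * y * u)"
      by (simp add: mult.assoc) (metis mult.assoc mult_1_left uu(2))
    then show "x * y \<in> ?D" using xy B by (simp add: cstar_closed_def)
  qed
  moreover have "\<forall>c. \<forall>x\<in>?D. cscale c x \<in> ?D"
  proof (intro allI ballI)
    fix c x assume x: "x \<in> ?D"
    have "cadj u * cscale c x * u = cscale c (cadj u * x * u)"
      by (simp add: cscale_mult_left cscale_mult_right)
    then show "cscale c x \<in> ?D" using x B by (simp add: cstar_closed_def)
  qed
  moreover have "\<forall>x\<in>?D. cadj x \<in> ?D"
  proof
    fix x assume x: "x \<in> ?D"
    have "cadj u * cadj x * u = cadj (cadj u * x * u)"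
      by (simp add: cadj_mult cadj_cadj mult.assoc)
    then show "cadj x \<in> ?D" using x B by (simp add: cstar_closed_def)
  qed
  ultimately have "cstar_closed ?D" by (simp add: cstar_closed_def)
  then have "cstar_gen W \<subseteq> ?D" using h by (intro cstar_gen_min) auto
  then have all: "\<And>y. cadj u * y * u \<in> B" using W by auto
  have "z \<in> B" for z
  proof -
    have "cadj u * (u * z * cadj u) * u = z"
      by (simp add: mult.assoc uu) (metis mult.assoc mult_1_left uu(1))
    then show "z \<in> B" using all[of "u * z * cadj u"] by simp
  qed
  then show ?thesis by auto
qed

lemma bc_map:
  assumes "\<forall>f\<in>oedges G. \<phi> f \<in> oedges G \<and> \<phi> (rv G f) = rv G (\<phi> f)"
  shows "htp G `` {P @ a @ P' | a. a \<in> map \<phi> ` hclass G c} = hclass G (P @ map \<phi> c @ P')"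
proof (rule equalityI; rule subsetI)
  fix y assume "y \<in> htp G `` {P @ a @ P' | a. a \<in> map \<phi> ` hclass G c}"
  then obtain x where x: "(c, x) \<in> htp G" "(P @ map \<phi> x @ P', y) \<in> htp G"
    by (auto simp: mem_hclass)
  have "(P @ map \<phi> c @ P', P @ map \<phi> x @ P') \<in> htp G"
    by (rule htp_cong[OF htp_map[OF assms x(1)]])
  then show "y \<in> hclass G (P @ map \<phi> c @ P')" using x(2) by (simp add: mem_hclass htp_trans)
next
  fix y assume "y \<in> hclass G (P @ map \<phi> c @ P')"
  moreover have "c \<in> hclass G c" by (simp add: mem_hclass htp_refl)
  ultimately show "y \<in> htp G `` {P @ a @ P' | a. a \<in> map \<phi> ` hclass G c}"
    by (auto simp: mem_hclass)
qed

lemma lwalk_props: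
  assumes G: "finite_connected_graph G" and Tr: "spanning_tree G Tr" and r: "r \<in> verts G"
    and f: "f \<in> oedges G"
  shows "walk G r (lwalk G Tr r f) r \<and> set (lwalk G Tr r f) \<subseteq> insert f Tr"
  using tpath_props[OF G Tr r org_in[OF G f]] tpath_props[OF G Tr tm_in[OF G f] r]
  unfolding lwalk_def by (auto simp: walk_append)



theorem mainTheorem3:
  fixes G :: "('v, 'o) graph" and T :: "'o set" and r :: 'v
    and wt :: "'o \<Rightarrow> 'a::cstar"
    and \<phi>V :: "'v \<Rightarrow> 'v" and \<phi>O :: "'o \<Rightarrow> 'o"
  assumes graph: "finite_connected_graph G"
    and tree: "spanning_tree G T" and root: "r \<in> verts G"
    and weights: "weight_function G T wt"
    and aut: "graph_aut G \<phi>V \<phi>O"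
  defines "T' \<equiv> \<phi>O ` T" and "r' \<equiv> \<phi>V r"
    and "wt' \<equiv> regauge G T r (\<phi>O ` T) (\<phi>V r) wt"
  shows
    \<comment> \<open>(1) uniqueness, determined by the non-tree edges\<close>
    "(\<forall>\<psi>1 \<psi>2. star_aut \<psi>1 \<and> star_aut \<psi>2
         \<and> (\<forall>f\<in>oedges G - T. \<psi>1 (wt f) = wt' (\<phi>O f))
         \<and> (\<forall>f\<in>oedges G - T. \<psi>2 (wt f) = wt' (\<phi>O f)) \<longrightarrow> \<psi>1 = \<psi>2)
     \<and> (\<forall>\<psi>. star_aut \<psi> \<and> (\<forall>f\<in>oedges G - T. \<psi> (wt f) = wt' (\<phi>O f))
         \<longrightarrow> (\<forall>f\<in>oedges G. \<psi> (wt f) = wt' (\<phi>O f)))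
     \<comment> \<open>(2) the elements wt'(phi f) generate the algebra\<close>
     \<and> cstar_gen ((\<lambda>f. wt' (\<phi>O f)) ` oedges G) = UNIV
     \<comment> \<open>(3) induced by an automorphism of the fundamental group\<close>
     \<and> (\<exists>\<beta>. \<beta> \<in> iso (pi1 G r) (pi1 G r)
         \<and> (\<forall>f\<in>oedges G - T. \<beta> (hclass G (lwalk G T r f))
                = basechange G T r r' (hclass G (lwalk G T' r' (\<phi>O f))))
         \<and> (\<forall>\<psi>. star_aut \<psi> \<and> (\<forall>f\<in>oedges G. \<psi> (wt f) = wt' (\<phi>O f))
              \<longrightarrow> (\<forall>x\<in>carrier (pi1 G r). \<psi> (rho wt x) = rho wt (\<beta> x))))"
proof -
  let ?E = "oedges G"
  have sub: "T \<subseteq> ?E" by (rule tr_sub[OF graph tree])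
  have wtu: "\<And>f. f \<in> ?E \<Longrightarrow> unitary (wt f)" and wtrv: "\<And>f. f \<in> ?E \<Longrightarrow> wt (rv G f) = cadj (wt f)"
    and wt1: "\<And>f. f \<in> T \<Longrightarrow> wt f = 1" and wgen: "cstar_gen (wt ` ?E) = UNIV"
    using weights by (auto simp: weight_function_def)
  have wrv: "\<forall>f\<in>?E. wt (rv G f) * wt f = 1" using wtu wtrv by (simp add: unitary_def)
  have T': "spanning_tree G T'" unfolding T'_def by (rule tree_image[OF graph aut tree])
  have T'sub: "T' \<subseteq> ?E" by (rule tr_sub[OF graph T'])
  have r': "r' \<in> verts G" unfolding r'_def by (rule aut_V[OF graph aut root])
  define P where "P = tpath G T r r'"
  define P' where "P' = tpath G T r' r"
  have Pp: "set P \<subseteq> T \<and> walk G r P r' \<and> red G P" unfolding P_def by (rule tpath_props[OF graph tree root r'])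
  have P'p: "set P' \<subseteq> T \<and> walk G r' P' r \<and> red G P'" unfolding P'_def by (rule tpath_props[OF graph tree r' root])
  have rP: "rho_walk wt P = 1" "rho_walk wt P' = 1" using Pp P'p wt1 by (auto intro!: rho_walk_one)
  have wt'_def2: "wt' = regauge G T r T' r' wt" using wt'_def T'_def r'_def by simp
  have wt'_l: "wt' g = rho_walk wt (lwalk G T' r' g)" for g
  proof -
    have "wt' g = rho wt (htp G `` {P @ a @ P' | a. a \<in> hclass G (lwalk G T' r' g)})"
      unfolding wt'_def2 regauge_def basechange_def P_def P'_def ..
    also have "\<dots> = rho wt (hclass G (P @ lwalk G T' r' g @ P'))" by (simp only: bc_class)
    also have "\<dots> = rho_walk wt (lwalk G T' r' g)" using rP by (simp add: rho_class[OF wrv])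
    finally show ?thesis .
  qed
  define S where "S x = rho_walk wt (tpath G T' r' x)" for x
  define S' where "S' x = rho_walk wt (tpath G T' x r')" for x
  have SS: "S' x * S x = 1 \<and> S x * S' x = 1" if x: "x \<in> verts G" for x
  proof -
    have a: "set (tpath G T' r' x) \<subseteq> T' \<and> walk G r' (tpath G T' r' x) x \<and> red G (tpath G T' r' x)"
      by (rule tpath_props[OF graph T' r' x])
    have b: "set (tpath G T' x r') \<subseteq> T' \<and> walk G x (tpath G T' x r') r' \<and> red G (tpath G T' x r')"
      by (rule tpath_props[OF graph T' x r'])
    have "(tpath G T' r' x @ tpath G T' x r', []) \<in> htp G"
      by (rule tr_null[OF graph T']) (use a b in \<open>auto simp: walk_append\<close>)
    then have 1: "rho_walk wt (tpath G T' r' x @ tpath G T' x r') = 1"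
      using rho_htp[OF wrv] by fastforce
    have "(tpath G T' x r' @ tpath G T' r' x, []) \<in> htp G"
      by (rule tr_null[OF graph T']) (use a b in \<open>auto simp: walk_append\<close>)
    then have 2: "rho_walk wt (tpath G T' x r' @ tpath G T' r' x) = 1"
      using rho_htp[OF wrv] by fastforce
    show ?thesis using 1 2 by (simp add: S_def S'_def)
  qed
  have S_r': "S r' = 1" "S' r' = 1" by (simp_all add: S_def S'_def tpath_same[OF graph T' r'])
  have wt'_S: "wt' g = S' (tm G g) * wt g * S (org G g)" for g
    unfolding wt'_l lwalk_def S_def S'_def by (simp add: mult.assoc)
  have tele: "rho_walk wt' p = S' y * rho_walk wt p * S x"
    if "set p \<subseteq> ?E" "walk G x p y" "x \<in> verts G" for p x y
    using that
  proof (induction p arbitrary: x)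
    case Nil then show ?case using SS[of x] by simp
  next
    case (Cons g p)
    have g: "g \<in> ?E" "org G g = x" "walk G (tm G g) p y" using Cons.prems by auto
    have tg: "tm G g \<in> verts G" by (rule tm_in[OF graph g(1)])
    have IH: "rho_walk wt' p = S' y * rho_walk wt p * S (tm G g)"
      using Cons.IH[of "tm G g"] Cons.prems g tg by auto
    have "rho_walk wt' (g # p) = S' y * rho_walk wt p * (S (tm G g) * S' (tm G g)) * wt g * S x"
      using IH wt'_S[of g] g by (simp add: mult.assoc)
    also have "\<dots> = S' y * rho_walk wt (g # p) * S x" using SS[OF tg] by (simp add: mult.assoc)
    finally show ?case .
  qed
  have part1a: "\<forall>\<psi>1 \<psi>2. star_aut \<psi>1 \<and> star_aut \<psi>2
         \<and> (\<forall>f\<in>oedges G - T. \<psi>1 (wt f) = wt' (\<phi>O f))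
         \<and> (\<forall>f\<in>oedges G - T. \<psi>2 (wt f) = wt' (\<phi>O f)) \<longrightarrow> \<psi>1 = \<psi>2"
  proof (intro allI impI)
    fix \<psi>1 \<psi>2 :: "'a \<Rightarrow> 'a"
    assume H: "star_aut \<psi>1 \<and> star_aut \<psi>2
         \<and> (\<forall>f\<in>oedges G - T. \<psi>1 (wt f) = wt' (\<phi>O f))
         \<and> (\<forall>f\<in>oedges G - T. \<psi>2 (wt f) = wt' (\<phi>O f))"
    show "\<psi>1 = \<psi>2"
    proof (rule aut_unique[OF _ _ wgen])
      show "\<forall>w\<in>wt ` ?E. \<psi>1 w = \<psi>2 w"
      proof
        fix w assume "w \<in> wt ` ?E"
        then obtain f where f: "f \<in> ?E" "w = wt f" by blast
        show "\<psi>1 w = \<psi>2 w"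
        proof (cases "f \<in> T")
          case True then have "w = 1" using wt1 f by simp
          then show ?thesis using H by (simp add: star_aut_def)
        next
          case False then show ?thesis using H f by auto
        qed
      qed
    qed (use H in auto)
  qed
  have tree1: "wt' (\<phi>O f) = 1" if f: "f \<in> T" for f
  proof -
    have fE: "f \<in> ?E" using f sub by auto
    have g: "\<phi>O f \<in> T'" using f T'_def by simp
    have gE: "\<phi>O f \<in> ?E" by (rule aut_O[OF graph aut fE])
    have L: "walk G r' (lwalk G T' r' (\<phi>O f)) r' \<and> set (lwalk G T' r' (\<phi>O f)) \<subseteq> insert (\<phi>O f) T'"
      by (rule lwalk_props[OF graph T' r' gE])
    have "(lwalk G T' r' (\<phi>O f), []) \<in> htp G"
      by (rule tr_null[OF graph T']) (use L g in auto)
    then show "wt' (\<phi>O f) = 1" using wt'_l rho_htp[OF wrv] by fastforce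
  qed
  have part1b: "\<forall>\<psi>. star_aut \<psi> \<and> (\<forall>f\<in>oedges G - T. \<psi> (wt f) = wt' (\<phi>O f))
         \<longrightarrow> (\<forall>f\<in>oedges G. \<psi> (wt f) = wt' (\<phi>O f))"
  proof (intro allI impI ballI)
    fix \<psi> :: "'a \<Rightarrow> 'a" and f
    assume H: "star_aut \<psi> \<and> (\<forall>f\<in>oedges G - T. \<psi> (wt f) = wt' (\<phi>O f))" and f: "f \<in> ?E"
    show "\<psi> (wt f) = wt' (\<phi>O f)"
    proof (cases "f \<in> T")
      case True
      then show ?thesis using wt1[OF True] tree1[OF True] H by (simp add: star_aut_def)
    next
      case False then show ?thesis using H f by auto
    qed
  qed
  let ?B = "cstar_gen ((\<lambda>f. wt' (\<phi>O f)) ` ?E)"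
  have Bc: "cstar_closed ?B" by (rule cstar_gen_closed)
  have Bmul: "x * y \<in> ?B" if "x \<in> ?B" "y \<in> ?B" for x y
    using Bc that by (simp add: cstar_closed_def)
  have wt'B: "wt' g \<in> ?B" if g: "g \<in> ?E" for g
  proof -
    have "g \<in> \<phi>O ` ?E" using aut g by (auto simp: graph_aut_def bij_betw_def)
    then obtain f where f: "f \<in> ?E" "g = \<phi>O f" by blast
    have "wt' g \<in> (\<lambda>f. wt' (\<phi>O f)) ` ?E" using f by simp
    then show "wt' g \<in> ?B" by (rule subsetD[OF cstar_gen_sub])
  qed
  have rhoB: "rho_walk wt' p \<in> ?B" if "set p \<subseteq> ?E" for p
    by (rule cstar_closed_rho[OF Bc]) (use wt'B that in blast)
  have SB1: "S' r * S x \<in> ?B" if x: "x \<in> verts G" for x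
  proof -
    have q: "set (tpath G T x r) \<subseteq> T \<and> walk G x (tpath G T x r) r \<and> red G (tpath G T x r)"
      by (rule tpath_props[OF graph tree x root])
    have "rho_walk wt' (tpath G T x r) = S' r * rho_walk wt (tpath G T x r) * S x"
      by (rule tele) (use q sub x in auto)
    moreover have "rho_walk wt (tpath G T x r) = 1" using q wt1 by (auto intro!: rho_walk_one)
    moreover have "rho_walk wt' (tpath G T x r) \<in> ?B" using q sub by (intro rhoB) auto
    ultimately show ?thesis by simp
  qed
  have SB2: "S' x * S r \<in> ?B" if x: "x \<in> verts G" for x
  proof -
    have q: "set (tpath G T r x) \<subseteq> T \<and> walk G r (tpath G T r x) x \<and> red G (tpath G T r x)"
      by (rule tpath_props[OF graph tree root x])
    have "rho_walk wt' (tpath G T r x) = S' x * rho_walk wt (tpath G T r x) * S r"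
      by (rule tele) (use q sub root in auto)
    moreover have "rho_walk wt (tpath G T r x) = 1" using q wt1 by (auto intro!: rho_walk_one)
    moreover have "rho_walk wt' (tpath G T r x) \<in> ?B" using q sub by (intro rhoB) auto
    ultimately show ?thesis by simp
  qed
  have uS: "unitary (S r)"
  proof -
    have "set (tpath G T' r' r) \<subseteq> T'" using tpath_props[OF graph T' r' root] by blast
    then show ?thesis unfolding S_def using T'sub wtu by (intro unitary_rho_walk) auto
  qed
  have cS: "cadj (S r) = S' r"
  proof -
    have "cadj (S r) = (S' r * S r) * cadj (S r)" using SS[OF root] by simp
    also have "\<dots> = S' r * (S r * cadj (S r))" by (simp add: mult.assoc)
    also have "\<dots> = S' r" using uS by (simp add: unitary_def)
    finally show ?thesis .
  qed
  have part2: "?B = UNIV"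
  proof (rule conj_gen[OF uS Bc wgen])
    show "\<forall>w\<in>wt ` ?E. cadj (S r) * w * S r \<in> ?B"
    proof
      fix w assume "w \<in> wt ` ?E"
      then obtain g where g: "g \<in> ?E" "w = wt g" by blast
      have tg: "tm G g \<in> verts G" and og: "org G g \<in> verts G"
        using tm_in[OF graph g(1)] org_in[OF graph g(1)] by auto
      have "S (tm G g) * wt' g * S' (org G g) = (S (tm G g) * S' (tm G g)) * wt g * (S (org G g) * S' (org G g))"
        using wt'_S[of g] by (simp add: mult.assoc)
      also have "\<dots> = wt g" using SS[OF tg] SS[OF og] by simp
      finally have eq: "wt g = S (tm G g) * wt' g * S' (org G g)" by simp
      have "cadj (S r) * w * S r = ((S' r * S (tm G g)) * wt' g) * (S' (org G g) * S r)"
        using eq cS g by (simp add: mult.assoc)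
      then show "cadj (S r) * w * S r \<in> ?B"
        using Bmul[OF Bmul[OF SB1[OF tg] wt'B[OF g(1)]] SB2[OF og]] by simp
    qed
  qed
  define iV where "iV = inv_into (verts G) \<phi>V"
  define iO where "iO = inv_into ?E \<phi>O"
  have ia: "graph_aut G iV iO" unfolding iV_def iO_def by (rule aut_inv[OF graph aut])
  have bV: "bij_betw \<phi>V (verts G) (verts G)" and bO: "bij_betw \<phi>O ?E ?E"
    using aut by (auto simp: graph_aut_def)
  have phiok: "\<forall>f\<in>?E. \<phi>O f \<in> ?E \<and> \<phi>O (rv G f) = rv G (\<phi>O f)"
    using aut_O[OF graph aut] aut_rv[OF graph aut] by blast
  have iok: "\<forall>f\<in>?E. iO f \<in> ?E \<and> iO (rv G f) = rv G (iO f)"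
    using aut_O[OF graph ia] aut_rv[OF graph ia] by blast
  have iOphi: "iO (\<phi>O f) = f" if "f \<in> ?E" for f
    unfolding iO_def using inv_into_f_f[OF aut_injO[OF graph aut] that] .
  have phiiO: "\<phi>O (iO f) = f" if "f \<in> ?E" for f
    unfolding iO_def using bij_betw_inv_into_right[OF bO that] .
  have iVr': "iV r' = r"
    unfolding iV_def r'_def using inv_into_f_f[OF bij_betw_imp_inj_on[OF bV] root] .
  define \<beta> where "\<beta> X = basechange G T r r' (map \<phi>O ` X)" for X
  have \<beta>c: "\<beta> (hclass G c) = hclass G (P @ map \<phi>O c @ P')" for c
    unfolding \<beta>_def basechange_def P_def[symmetric] P'_def[symmetric] by (rule bc_map[OF phiok])
  have nPP1: "(P' @ P, []) \<in> htp G"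
    by (rule tr_null[OF graph tree]) (use Pp P'p in \<open>auto simp: walk_append\<close>)
  have nPP2: "(P @ P', []) \<in> htp G"
    by (rule tr_null[OF graph tree]) (use Pp P'p in \<open>auto simp: walk_append\<close>)
  have elim: "(a @ Q @ b, a @ b) \<in> htp G" if "(Q, []) \<in> htp G" for a b Q
    using htp_cong[OF that, of a b] by simp
  have car: "carrier (pi1 G r) = hclass G ` closed_walks G r" by (simp add: pi1_def)
  have mul: "hclass G a \<otimes>\<^bsub>pi1 G r\<^esub> hclass G b = hclass G (a @ b)" for a b
    by (simp add: pi1_def mult_class)
  have walk_phi: "walk G r' (map \<phi>O c) r'" if "c \<in> closed_walks G r" for c
    using walk_map[OF graph aut, of c r r] that unfolding r'_def closed_walks_def by auto
  have set_phi: "set (map \<phi>O c) \<subseteq> ?E" if "c \<in> closed_walks G r" for c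
    using that phiok unfolding closed_walks_def by auto
  have \<beta>car: "P @ map \<phi>O c @ P' \<in> closed_walks G r" if c: "c \<in> closed_walks G r" for c
    using walk_phi[OF c] set_phi[OF c] Pp P'p sub unfolding closed_walks_def
    by (auto simp: walk_append)
  have \<beta>in: "\<beta> \<in> carrier (pi1 G r) \<rightarrow> carrier (pi1 G r)"
  proof
    fix X assume "X \<in> carrier (pi1 G r)"
    then obtain c where c: "c \<in> closed_walks G r" "X = hclass G c" by (auto simp: car)
    show "\<beta> X \<in> carrier (pi1 G r)" using \<beta>car[OF c(1)] c(2) \<beta>c car by simp
  qed
  have \<beta>mul: "\<forall>X\<in>carrier (pi1 G r). \<forall>Y\<in>carrier (pi1 G r).
      \<beta> (X \<otimes>\<^bsub>pi1 G r\<^esub> Y) = \<beta> X \<otimes>\<^bsub>pi1 G r\<^esub> \<beta> Y"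
  proof (intro ballI)
    fix X Y assume "X \<in> carrier (pi1 G r)" "Y \<in> carrier (pi1 G r)"
    then obtain c d where c: "X = hclass G c" and d: "Y = hclass G d" by (auto simp: car)
    have "\<beta> (X \<otimes>\<^bsub>pi1 G r\<^esub> Y) = hclass G ((P @ map \<phi>O c) @ (map \<phi>O d @ P'))"
      using mul \<beta>c c d by simp
    also have "\<dots> = hclass G ((P @ map \<phi>O c) @ (P' @ P) @ (map \<phi>O d @ P'))"
      by (subst hclass_eq) (rule htp_sym[OF elim[OF nPP1]])
    also have "\<dots> = \<beta> X \<otimes>\<^bsub>pi1 G r\<^esub> \<beta> Y" using mul \<beta>c c d by simp
    finally show "\<beta> (X \<otimes>\<^bsub>pi1 G r\<^esub> Y) = \<beta> X \<otimes>\<^bsub>pi1 G r\<^esub> \<beta> Y" .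
  qed
  have strip: "(P' @ (P @ x @ P') @ P, x) \<in> htp G" for x
  proof -
    have "(P' @ (P @ x @ P') @ P, [] @ x @ (P' @ P)) \<in> htp G"
      using elim[OF nPP1, of "[]" "x @ P' @ P"] by simp
    moreover have "(x @ (P' @ P) @ [], x @ []) \<in> htp G" by (rule elim[OF nPP1])
    ultimately show ?thesis by (auto intro: htp_trans)
  qed
  have \<beta>inj: "inj_on \<beta> (carrier (pi1 G r))"
  proof (rule inj_onI)
    fix X Y assume "X \<in> carrier (pi1 G r)" "Y \<in> carrier (pi1 G r)" and e: "\<beta> X = \<beta> Y"
    then obtain c d where c: "c \<in> closed_walks G r" "X = hclass G c"
      and d: "d \<in> closed_walks G r" "Y = hclass G d" by (auto simp: car)
    have h: "(P @ map \<phi>O c @ P', P @ map \<phi>O d @ P') \<in> htp G"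
      using e c d \<beta>c hclass_eq by metis
    have "(P' @ (P @ map \<phi>O c @ P') @ P, P' @ (P @ map \<phi>O d @ P') @ P) \<in> htp G"
      by (rule htp_cong[OF h])
    then have "(map \<phi>O c, map \<phi>O d) \<in> htp G"
      using strip htp_sym htp_trans by metis
    then have "(map iO (map \<phi>O c), map iO (map \<phi>O d)) \<in> htp G" by (rule htp_map[OF iok])
    moreover have "map iO (map \<phi>O c) = c" "map iO (map \<phi>O d) = d"
      using c(1) d(1) iOphi unfolding closed_walks_def by (auto intro!: map_idI)
    ultimately show "X = Y" using c d hclass_eq by metis
  qed
  have \<beta>surj: "\<beta> ` carrier (pi1 G r) = carrier (pi1 G r)"
  proof
    show "\<beta> ` carrier (pi1 G r) \<subseteq> carrier (pi1 G r)" using \<beta>in by auto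
  next
    show "carrier (pi1 G r) \<subseteq> \<beta> ` carrier (pi1 G r)"
    proof
      fix Z assume "Z \<in> carrier (pi1 G r)"
      then obtain c where c: "c \<in> closed_walks G r" "Z = hclass G c" by (auto simp: car)
      let ?w = "P' @ c @ P"
      have sw: "set ?w \<subseteq> ?E" using c(1) Pp P'p sub unfolding closed_walks_def by auto
      have ww: "walk G r' ?w r'" using c(1) Pp P'p unfolding closed_walks_def by (auto simp: walk_append)
      define d where "d = map iO ?w"
      have dc: "d \<in> closed_walks G r"
        using walk_map[OF graph ia sw ww] sw iok iVr' unfolding d_def closed_walks_def by auto
      have md: "map \<phi>O d = ?w" unfolding d_def using sw phiiO by (auto intro!: map_idI)
      have "\<beta> (hclass G d) = hclass G ((P @ P') @ c @ (P @ P'))" using \<beta>c md by simp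
      also have "\<dots> = hclass G c"
      proof (subst hclass_eq)
        have "((P @ P') @ c @ (P @ P'), [] @ c @ (P @ P')) \<in> htp G"
          using elim[OF nPP2, of "[]" "c @ P @ P'"] by simp
        moreover have "(c @ (P @ P') @ [], c @ []) \<in> htp G" by (rule elim[OF nPP2])
        ultimately show "((P @ P') @ c @ (P @ P'), c) \<in> htp G" by (auto intro: htp_trans)
      qed
      finally have "\<beta> (hclass G d) = Z" using c(2) by simp
      moreover have "hclass G d \<in> carrier (pi1 G r)" using dc car by simp
      ultimately show "Z \<in> \<beta> ` carrier (pi1 G r)" by blast
    qed
  qed
  have \<beta>iso: "\<beta> \<in> iso (pi1 G r) (pi1 G r)"
    unfolding iso_def hom_def bij_betw_def using \<beta>in \<beta>mul \<beta>inj \<beta>surj by simp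
  have \<beta>l: "\<forall>f\<in>oedges G - T. \<beta> (hclass G (lwalk G T r f))
                = basechange G T r r' (hclass G (lwalk G T' r' (\<phi>O f)))"
  proof
    fix f assume "f \<in> oedges G - T"
    then have f: "f \<in> ?E" by simp
    have "\<beta> (hclass G (lwalk G T r f)) = hclass G (P @ map \<phi>O (lwalk G T r f) @ P')" by (rule \<beta>c)
    also have "\<dots> = hclass G (P @ lwalk G T' r' (\<phi>O f) @ P')"
      using lwalk_map[OF graph aut tree root f] unfolding T'_def r'_def by simp
    also have "\<dots> = basechange G T r r' (hclass G (lwalk G T' r' (\<phi>O f)))"
      unfolding basechange_def P_def P'_def by (simp only: bc_class)
    finally show "\<beta> (hclass G (lwalk G T r f)) = basechange G T r r' (hclass G (lwalk G T' r' (\<phi>O f)))" .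
  qed
  have \<beta>rho: "\<forall>\<psi>. star_aut \<psi> \<and> (\<forall>f\<in>oedges G. \<psi> (wt f) = wt' (\<phi>O f))
              \<longrightarrow> (\<forall>x\<in>carrier (pi1 G r). \<psi> (rho wt x) = rho wt (\<beta> x))"
  proof (intro allI impI ballI)
    fix \<psi> :: "'a \<Rightarrow> 'a" and X
    assume H: "star_aut \<psi> \<and> (\<forall>f\<in>oedges G. \<psi> (wt f) = wt' (\<phi>O f))" and X: "X \<in> carrier (pi1 G r)"
    then obtain c where c: "c \<in> closed_walks G r" "X = hclass G c" by (auto simp: car)
    have sc: "set c \<subseteq> ?E" using c(1) unfolding closed_walks_def by auto
    have "\<psi> (rho wt X) = \<psi> (rho_walk wt c)" using c(2) rho_class[OF wrv] by simp
    also have "\<dots> = rho_walk (\<psi> \<circ> wt) c"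
      using H by (intro hom_rho_walk) (auto simp: star_aut_def)
    also have "\<dots> = rho_walk (wt' \<circ> \<phi>O) c"
      using H sc by (intro rho_walk_cong) auto
    also have "\<dots> = rho_walk wt' (map \<phi>O c)" by (simp add: rho_walk_map)
    also have "\<dots> = S' r' * rho_walk wt (map \<phi>O c) * S r'"
      by (rule tele) (use walk_phi[OF c(1)] set_phi[OF c(1)] r' in auto)
    also have "\<dots> = rho_walk wt (P @ map \<phi>O c @ P')" using S_r' rP by simp
    also have "\<dots> = rho wt (\<beta> X)" using c(2) \<beta>c rho_class[OF wrv] by simp
    finally show "\<psi> (rho wt X) = rho wt (\<beta> X)" .
  qed
  show ?thesis using part1a part1b part2 \<beta>iso \<beta>l \<beta>rho by blast
qed



end
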